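(* Let $\mathcal G$ be a temporal graph with $n$ vertices and $m$ contacts, considered with strict journeys. Then there exists a happy temporal graph $\mathcal H$ with $n+2m$ vertices and $4m$ edges, together with an (injective) mapping $\sigma:V_{\mathcal G}\to V_{\mathcal H}$, such that for all $u,v\in V_{\mathcal G}$, $(u,v)$ is an arc of the strict reachability graph $\mathcal C(\mathcal G)$ if and only if $(\sigma(u),\sigma(v))$ is an arc of $\mathcal C(\mathcal H)$.
   Context: A temporal graph is a triple $\mathcal G=(V,E,\lambda)$ where $V$ is a finite vertex set, $E$ is a set of undirected edges on $V$, and $\lambda:E\to 2^{\mathbb N}\setminus\{\emptyset\}$ assigns to each edge a nonempty set of presence times. The footprint of $\mathcal G$ is the static graph $(V,E)$. A contact is a pair $(e,t)$ with $e\in E$ and $t\in\lambda(e)$. A journey from $u$ to $v$ is a sequence of contacts $(e_1,t_1),\dots,(e_k,t_k)$, $k\ge 1$, such that $e_1,\dots,e_k$ form a path from $u$ to $v$ in the footprint and $t_1\le t_2\le\dots\le t_k$ (a non-strict journey); it is strict if $t_1<t_2<\dots<t_k$. $\mathcal G$ is proper if $\lambda(e)\cap\lambda(e')=\emptyset$ for any two distinct edges $e,e'$ sharing an endpoint (in a proper graph every journey is strict); simple if $|\lambda(e)|=1$ for every edge $e$; happy if it is both proper and simple. The reachability graph $\mathcal C(\mathcal G)$ (with respect to a chosen journey notion) is the directed graph on $V$ having an arc $(u,v)$, $u\neq v$, if and only if there is a journey from $u$ to $v$. *)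

theory Defs
  imports Main
begin

definition temporal_graph :: "'v set \<Rightarrow> 'v set set \<Rightarrow> ('v set \<Rightarrow> nat set) \<Rightarrow> bool" where
  "temporal_graph V E lam \<longleftrightarrow> finite V
     \<and> (\<forall>e\<in>E. \<exists>x y. x \<noteq> y \<and> x \<in> V \<and> y \<in> V \<and> e = {x, y})
     \<and> (\<forall>e\<in>E. lam e \<noteq> {})"

definition contacts :: "'v set set \<Rightarrow> ('v set \<Rightarrow> nat set) \<Rightarrow> ('v set \<times> nat) set" where
  "contacts E lam = {(e, t). e \<in> E \<and> t \<in> lam e}"

definition proper :: "'v set set \<Rightarrow> ('v set \<Rightarrow> nat set) \<Rightarrow> bool" where
  "proper E lam \<longleftrightarrow> (\<forall>e\<in>E. \<forall>e'\<in>E. e \<noteq> e' \<and> e \<inter> e' \<noteq> {} \<longrightarrow> lam e \<inter> lam e' = {})"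

definition simple :: "'v set set \<Rightarrow> ('v set \<Rightarrow> nat set) \<Rightarrow> bool" where
  "simple E lam \<longleftrightarrow> (\<forall>e\<in>E. card (lam e) = 1)"

definition happy :: "'v set set \<Rightarrow> ('v set \<Rightarrow> nat set) \<Rightarrow> bool" where
  "happy E lam \<longleftrightarrow> proper E lam \<and> simple E lam"

definition strict_journey :: "'v set set \<Rightarrow> ('v set \<Rightarrow> nat set) \<Rightarrow> 'v \<Rightarrow> 'v \<Rightarrow> 'v list \<Rightarrow> nat list \<Rightarrow> bool" where
  "strict_journey E lam u v vs ts \<longleftrightarrow>
     length ts \<ge> 1 \<and> length vs = length ts + 1 \<and> distinct vs
     \<and> hd vs = u \<and> last vs = v
     \<and> (\<forall>i < length ts. {vs ! i, vs ! Suc i} \<in> E \<and> ts ! i \<in> lam {vs ! i, vs ! Suc i})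
     \<and> sorted_wrt (<) ts"

definition reach_arc :: "'v set \<Rightarrow> 'v set set \<Rightarrow> ('v set \<Rightarrow> nat set) \<Rightarrow> 'v \<Rightarrow> 'v \<Rightarrow> bool" where
  "reach_arc V E lam u v \<longleftrightarrow> u \<in> V \<and> v \<in> V \<and> u \<noteq> v \<and> (\<exists>vs ts. strict_journey E lam u v vs ts)"

end

theory Submission
  imports Defs
begin


inductive jw :: "'v set set \<Rightarrow> ('v set \<Rightarrow> nat set) \<Rightarrow> 'v \<Rightarrow> 'v \<Rightarrow> nat \<Rightarrow> bool"
  for E lam where
  base: "{u,v} \<in> E \<Longrightarrow> t \<in> lam {u,v} \<Longrightarrow> jw E lam u v t"
| step: "jw E lam u w b \<Longrightarrow> {w,v} \<in> E \<Longrightarrow> t \<in> lam {w,v} \<Longrightarrow> b < t \<Longrightarrow> jw E lam u v t"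

lemma sorted_le_last: "sorted_wrt (<) (ts::nat list) \<Longrightarrow> x \<in> set ts \<Longrightarrow> x \<le> last ts"
proof (induction ts)
  case Nil then show ?case by simp
next
  case (Cons a ts)
  show ?case
  proof (cases "ts = []")
    case True then show ?thesis using Cons by simp
  next
    case False
    then have "last ts \<in> set ts" by simp
    have "sorted_wrt (<) ts" "\<forall>y\<in>set ts. a < y" using Cons.prems by auto
    then show ?thesis using Cons False \<open>last ts \<in> set ts\<close> by (cases "x = a") (auto simp: less_imp_le)
  qed
qed

lemma journey_jw:
  assumes J: "strict_journey E lam u v vs ts"
  shows "jw E lam u v (last ts)"
proof -
  from J have L: "length ts \<ge> 1" "length vs = length ts + 1" "hd vs = u" "last vs = v"
    and Ed: "\<forall>i < length ts. {vs ! i, vs ! Suc i} \<in> E \<and> ts ! i \<in> lam {vs ! i, vs ! Suc i}"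
    and S: "sorted_wrt (<) ts"
    unfolding strict_journey_def by auto
  have "1 \<le> k \<longrightarrow> k \<le> length ts \<longrightarrow> jw E lam u (vs!k) (ts!(k-1))" for k
  proof (induction k)
    case 0 then show ?case by simp
  next
    case (Suc k)
    show ?case
    proof (intro impI)
      assume a: "1 \<le> Suc k" "Suc k \<le> length ts"
      show "jw E lam u (vs ! Suc k) (ts ! (Suc k - 1))"
      proof (cases "k = 0")
        case True
        have "vs ! 0 = u" using L by (metis hd_conv_nth list.size(3) add_is_0 zero_neq_one)
        then show ?thesis using Ed a True by (metis One_nat_def diff_Suc_1 jw.base less_eq_Suc_le)
      next
        case False
        then have ih: "jw E lam u (vs!k) (ts!(k-1))" using Suc a by simp
        have "ts!(k-1) < ts!k" using S a False by (metis Suc_le_lessD diff_less less_numeral_extra(1) order.strict_trans1 sorted_wrt_nth_less zero_less_iff_neq_zero)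
        then show ?thesis using Ed a ih by (auto intro: jw.step)
      qed
    qed
  qed
  from this[of "length ts"] L have "jw E lam u (vs ! length ts) (ts ! (length ts - 1))" by simp
  moreover have "vs ! length ts = v" using L by (metis last_conv_nth list.size(3) add_is_0 zero_neq_one diff_add_inverse2)
  moreover have "ts ! (length ts - 1) = last ts" using L by (metis last_conv_nth list.size(3) not_one_le_zero)
  ultimately show ?thesis by simp
qed

lemma jw_journey:
  assumes "jw E lam u v b" "u \<noteq> v"
  shows "\<exists>vs ts. strict_journey E lam u v vs ts \<and> last ts \<le> b"
  using assms
proof (induction rule: jw.induct)
  case (base u v t)
  then show ?case by (intro exI[of _ "[u,v]"] exI[of _ "[t]"]) (auto simp: strict_journey_def)
next
  case (step u w b v t)
  show ?case
  proof (cases "u = w")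
    case True
    then show ?thesis using step by (intro exI[of _ "[u,v]"] exI[of _ "[t]"]) (auto simp: strict_journey_def)
  next
    case False
    then obtain vs ts where J: "strict_journey E lam u w vs ts" and lb: "last ts \<le> b" using step by blast
    from J have L: "length ts \<ge> 1" "length vs = length ts + 1" "hd vs = u" "last vs = w" "distinct vs"
      and Ed: "\<forall>i < length ts. {vs ! i, vs ! Suc i} \<in> E \<and> ts ! i \<in> lam {vs ! i, vs ! Suc i}"
      and S: "sorted_wrt (<) ts"
      unfolding strict_journey_def by auto
    have vsne: "vs \<noteq> []" using L by auto
    show ?thesis
    proof (cases "v \<in> set vs")
      case False
      have wl: "vs ! length ts = w" using L by (metis last_conv_nth vsne diff_add_inverse2)
      have "strict_journey E lam u v (vs @ [v]) (ts @ [t])"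
        unfolding strict_journey_def
      proof (intro conjI)
        show "1 \<le> length (ts @ [t])" by simp
        show "length (vs @ [v]) = length (ts @ [t]) + 1" using L by simp
        show "distinct (vs @ [v])" using L False by simp
        show "hd (vs @ [v]) = u" using L vsne by simp
        show "last (vs @ [v]) = v" by simp
        show "sorted_wrt (<) (ts @ [t])"
          using S lb step.hyps(4) sorted_le_last[OF S] by (fastforce simp: sorted_wrt_append)
      next
        show "\<forall>i<length (ts @ [t]). {(vs @ [v]) ! i, (vs @ [v]) ! Suc i} \<in> E \<and> (ts @ [t]) ! i \<in> lam {(vs @ [v]) ! i, (vs @ [v]) ! Suc i}"
        proof (intro allI impI)
        fix i assume i: "i < length (ts @ [t])"
        show "{(vs @ [v]) ! i, (vs @ [v]) ! Suc i} \<in> E \<and> (ts @ [t]) ! i \<in> lam {(vs @ [v]) ! i, (vs @ [v]) ! Suc i}"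
        proof (cases "i < length ts")
          case True
          then show ?thesis using Ed L by (auto simp: nth_append)
        next
          case False
          then have "i = length ts" using i by simp
          then show ?thesis using step.hyps wl L by (auto simp: nth_append)
        qed
        qed
      qed
      moreover have "last (ts @ [t]) \<le> t" by simp
      ultimately show ?thesis by blast
    next
      case True
      then obtain j where j: "j < length vs" "vs ! j = v" by (metis in_set_conv_nth)
      have j0: "j \<noteq> 0" using j L step.prems vsne by (metis hd_conv_nth)
      have "strict_journey E lam u v (take (Suc j) vs) (take j ts)"
        unfolding strict_journey_def
      proof (intro conjI)
        show "1 \<le> length (take j ts)" using j j0 L by simp
        show "length (take (Suc j) vs) = length (take j ts) + 1" using j L by simp
        show "distinct (take (Suc j) vs)" using L by simp
        show "hd (take (Suc j) vs) = u" using L by simp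
        show "last (take (Suc j) vs) = v" using j by (metis last_snoc take_Suc_conv_app_nth)
        show "sorted_wrt (<) (take j ts)" using S by simp
      next
        show "\<forall>i<length (take j ts). {take (Suc j) vs ! i, take (Suc j) vs ! Suc i} \<in> E \<and> take j ts ! i \<in> lam {take (Suc j) vs ! i, take (Suc j) vs ! Suc i}"
        proof (intro allI impI)
        fix i assume i: "i < length (take j ts)"
        then show "{take (Suc j) vs ! i, take (Suc j) vs ! Suc i} \<in> E \<and> take j ts ! i \<in> lam {take (Suc j) vs ! i, take (Suc j) vs ! Suc i}"
          using Ed by auto
        qed
      qed
      moreover have "last (take j ts) \<le> t"
      proof -
        have "take j ts \<noteq> []" using j j0 L(1) by auto
        then have "last (take j ts) \<in> set ts" by (meson in_set_takeD last_in_set)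
        then have "last (take j ts) \<le> last ts" using sorted_le_last[OF S] by blast
        then show ?thesis using lb step.hyps(4) by simp
      qed
      ultimately show ?thesis by blast
    qed
  qed
qed

lemma reach_jw: "reach_arc V E lam u v \<longleftrightarrow> u \<in> V \<and> v \<in> V \<and> u \<noteq> v \<and> (\<exists>b. jw E lam u v b)"
  unfolding reach_arc_def using journey_jw jw_journey by metis



locale cons =
  fixes V :: "'a set" and E :: "'a set set" and lam :: "'a set \<Rightarrow> nat set"
    and \<sigma> :: "'a \<Rightarrow> nat" and g :: "nat \<Rightarrow> 'a \<times> 'a \<times> nat" and n M :: nat
  assumes tg: "temporal_graph V E lam"
    and sig: "bij_betw \<sigma> V {0..<n}"
    and gb: "bij_betw g {0..<M} {(u,v,t). {u,v} \<in> E \<and> t \<in> lam {u,v}}"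
begin

definition "src i = fst (g i)"
definition "dst i = fst (snd (g i))"
definition "tm i = snd (snd (g i))"
definition "T1 i = 2*M*tm i + i"
definition "T2 i = 2*M*tm i + M + i"
definition "ed i c = (if c then {n+i, \<sigma> (dst i)} else {\<sigma> (src i), n+i})"
definition "lb i c = (if c then T2 i else T1 i)"
definition "EH = {ed i c | i c. i < M}"
definition "lamH e = {lb i c | i c. i < M \<and> e = ed i c}"
definition "VH = {0..<n+M}"

lemma gi: "i < M \<Longrightarrow> {src i, dst i} \<in> E \<and> tm i \<in> lam {src i, dst i}"
proof -
  assume i: "i < M"
  then have m: "g i \<in> {(u,v,t). {u,v} \<in> E \<and> t \<in> lam {u,v}}" using gb by (intro bij_betw_apply[OF gb]) auto
  obtain u v t where "g i = (u,v,t)" by (cases "g i") auto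
  then show ?thesis using m unfolding src_def dst_def tm_def by simp
qed

lemma edge2: "e \<in> E \<Longrightarrow> \<exists>x y. x \<noteq> y \<and> x \<in> V \<and> y \<in> V \<and> e = {x, y}"
  using tg unfolding temporal_graph_def by blast

lemma edgeV: "{x,y} \<in> E \<Longrightarrow> x \<in> V \<and> y \<in> V \<and> x \<noteq> y"
  using edge2 by (metis doubleton_eq_iff insert_absorb2)

lemma srcV: "i < M \<Longrightarrow> src i \<in> V \<and> dst i \<in> V \<and> src i \<noteq> dst i"
  using gi edgeV by blast

lemma gsurj: "{u,v} \<in> E \<Longrightarrow> t \<in> lam {u,v} \<Longrightarrow> \<exists>i<M. src i = u \<and> dst i = v \<and> tm i = t"
proof -
  assume a: "{u,v} \<in> E" "t \<in> lam {u,v}"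
  then have "(u,v,t) \<in> g ` {0..<M}" using gb unfolding bij_betw_def by auto
  then obtain i where "i < M" "g i = (u,v,t)" by auto
  then show ?thesis unfolding src_def dst_def tm_def by auto
qed

lemma sig_lt: "v \<in> V \<Longrightarrow> \<sigma> v < n"
  using sig unfolding bij_betw_def by auto

lemma sig_inj: "u \<in> V \<Longrightarrow> v \<in> V \<Longrightarrow> \<sigma> u = \<sigma> v \<Longrightarrow> u = v"
  using sig unfolding bij_betw_def inj_on_def by auto

lemma ed_inj: "i < M \<Longrightarrow> j < M \<Longrightarrow> ed i c = ed j d \<Longrightarrow> i = j \<and> c = d"
proof -
  assume a: "i < M" "j < M" "ed i c = ed j d"
  have s: "\<sigma> (src i) < n" "\<sigma> (dst i) < n" "\<sigma> (src j) < n" "\<sigma> (dst j) < n"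
    using srcV a sig_lt by auto
  have "n + j \<in> ed i c" using a(3) unfolding ed_def by auto
  then have ij: "i = j" using s unfolding ed_def by (auto split: if_splits)
  have ne: "\<sigma> (src i) \<noteq> \<sigma> (dst i)" using srcV[OF a(1)] sig_inj by metis
  show ?thesis
  proof (rule ccontr)
    assume "\<not> (i = j \<and> c = d)"
    then have "c \<noteq> d" using ij by auto
    then have "{n+i, \<sigma> (dst i)} = {\<sigma> (src i), n+i}" using a(3) ij unfolding ed_def by (cases c) auto
    then show False using ne s by (auto simp: doubleton_eq_iff)
  qed
qed

lemma lb_mod: "i < M \<Longrightarrow> lb i c mod (2*M) = i + (if c then M else 0)"
proof -
  assume i: "i < M"
  have a: "(2*M*tm i + i) mod (2*M) = i" using i by (metis add.commute mod_mult_self2 mod_less mult.commute less_trans_Suc mult_2 trans_less_add1 mod_less)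
  have b: "(2*M*tm i + M + i) mod (2*M) = i + M" using i
    by (metis add.commute add.assoc mod_mult_self2 mod_less mult.commute mult_2 add_less_mono1)
  show ?thesis unfolding lb_def T1_def T2_def using a b by simp
qed

lemma lb_inj: "i < M \<Longrightarrow> j < M \<Longrightarrow> lb i c = lb j d \<Longrightarrow> i = j \<and> c = d"
proof -
  assume a: "i < M" "j < M" "lb i c = lb j d"
  then have "i + (if c then M else 0) = j + (if d then M else 0)" using lb_mod by metis
  then show ?thesis using a by (cases c; cases d) auto
qed

lemma lamH_ed: "i < M \<Longrightarrow> lamH (ed i c) = {lb i c}"
proof -
  assume i: "i < M"
  have "x \<in> lamH (ed i c) \<longleftrightarrow> x = lb i c" for x
  proof
    assume "x \<in> lamH (ed i c)"
    then obtain j d where "x = lb j d" "j < M" "ed i c = ed j d" unfolding lamH_def by blast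
    moreover have "i = j \<and> c = d" using ed_inj[OF i] calculation by blast
    ultimately show "x = lb i c" by simp
  next
    assume "x = lb i c"
    then show "x \<in> lamH (ed i c)" unfolding lamH_def using i by blast
  qed
  then show ?thesis by blast
qed

lemma edge_cases: "T \<in> lamH {x,y} \<Longrightarrow>
   \<exists>i<M. ({x,y} = {\<sigma> (src i), n+i} \<and> T = T1 i) \<or> ({x,y} = {n+i, \<sigma> (dst i)} \<and> T = T2 i)"
proof -
  assume "T \<in> lamH {x,y}"
  then obtain i c where ic: "T = lb i c" "i < M" "{x,y} = ed i c" unfolding lamH_def by blast
  show ?thesis
  proof (cases c)
    case True then show ?thesis using ic unfolding ed_def lb_def by (intro exI[of _ i]) simp
  next
    case False then show ?thesis using ic unfolding ed_def lb_def by (intro exI[of _ i]) simp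
  qed
qed

lemma edge1: "i < M \<Longrightarrow> {\<sigma> (src i), n+i} \<in> EH \<and> T1 i \<in> lamH {\<sigma> (src i), n+i}"
  using lamH_ed[of i False] unfolding EH_def by (auto simp: ed_def lb_def)

lemma edge2H: "i < M \<Longrightarrow> {n+i, \<sigma> (dst i)} \<in> EH \<and> T2 i \<in> lamH {n+i, \<sigma> (dst i)}"
  using lamH_ed[of i True] unfolding EH_def by (auto simp: ed_def lb_def)

lemma tgH: "temporal_graph VH EH lamH"
  unfolding temporal_graph_def
proof (intro conjI ballI)
  show "finite VH" unfolding VH_def by simp
next
  fix e assume "e \<in> EH"
  then obtain i c where ic: "i < M" "e = ed i c" unfolding EH_def by auto
  have s: "\<sigma> (src i) < n" "\<sigma> (dst i) < n" using srcV ic sig_lt by auto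
  show "\<exists>x y. x \<noteq> y \<and> x \<in> VH \<and> y \<in> VH \<and> e = {x, y}"
  proof (cases c)
    case True then show ?thesis using ic s unfolding ed_def VH_def
      by (intro exI[of _ "n+i"] exI[of _ "\<sigma> (dst i)"]) auto
  next
    case False then show ?thesis using ic s unfolding ed_def VH_def
      by (intro exI[of _ "\<sigma> (src i)"] exI[of _ "n+i"]) auto
  qed
  show "lamH e \<noteq> {}" using lamH_ed ic by auto
qed

lemma happyH: "happy EH lamH"
  unfolding happy_def proper_def simple_def
proof (intro conjI ballI impI)
  fix e e' assume a: "e \<in> EH" "e' \<in> EH" "e \<noteq> e' \<and> e \<inter> e' \<noteq> {}"
  from a(1) obtain i c where ic: "i < M" "e = ed i c" unfolding EH_def by blast
  from a(2) obtain j d where jd: "j < M" "e' = ed j d" unfolding EH_def by blast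
  have "lb i c \<noteq> lb j d" using lb_inj[OF ic(1) jd(1)] a(3) ic jd by blast
  then show "lamH e \<inter> lamH e' = {}" using lamH_ed ic jd by simp
next
  fix e assume "e \<in> EH"
  then obtain i c where "i < M" "e = ed i c" unfolding EH_def by auto
  then show "card (lamH e) = 1" using lamH_ed by auto
qed

lemma cardEH: "card EH = 2 * M"
proof -
  have "EH = (\<lambda>(i,c). ed i c) ` ({0..<M} \<times> UNIV)" unfolding EH_def by auto
  moreover have "inj_on (\<lambda>(i,c). ed i c) ({0..<M} \<times> UNIV)"
    unfolding inj_on_def using ed_inj by auto
  ultimately have "card EH = card ({0..<M} \<times> (UNIV :: bool set))" by (simp add: card_image)
  then show ?thesis by (simp add: card_cartesian_product)
qed

lemma cardVH: "card VH = n + M" unfolding VH_def by simp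

lemma fwd: "jw E lam u v t \<Longrightarrow> \<exists>b'. jw EH lamH (\<sigma> u) (\<sigma> v) b' \<and> b' < 2*M*(t+1)"
proof (induction rule: jw.induct)
  case (base u v t)
  obtain i where i: "i < M" "src i = u" "dst i = v" "tm i = t" using gsurj base by blast
  have e1: "{\<sigma> u, n+i} \<in> EH" "T1 i \<in> lamH {\<sigma> u, n+i}" using edge1[OF i(1)] i by auto
  have e2: "{n+i, \<sigma> v} \<in> EH" "T2 i \<in> lamH {n+i, \<sigma> v}" using edge2H[OF i(1)] i by auto
  have lt: "T1 i < T2 i" using i by (simp add: T1_def T2_def)
  have "jw EH lamH (\<sigma> u) (n+i) (T1 i)" using e1 by (rule jw.base)
  then have "jw EH lamH (\<sigma> u) (\<sigma> v) (T2 i)" using e2 lt by (rule jw.step)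
  moreover have "T2 i < 2*M*(t+1)" using i by (simp add: T2_def algebra_simps)
  ultimately show ?case by blast
next
  case (step u w b v t)
  obtain i where i: "i < M" "src i = w" "dst i = v" "tm i = t" using gsurj step by blast
  obtain b' where b': "jw EH lamH (\<sigma> u) (\<sigma> w) b'" "b' < 2*M*(b+1)" using step by blast
  have "2*M*(b+1) \<le> 2*M*t" using step.hyps(4) by (intro mult_le_mono2) simp
  then have "b' < T1 i" using b' i by (simp add: T1_def)
  have e1: "{\<sigma> w, n+i} \<in> EH" "T1 i \<in> lamH {\<sigma> w, n+i}" using edge1[OF i(1)] i by auto
  have e2: "{n+i, \<sigma> v} \<in> EH" "T2 i \<in> lamH {n+i, \<sigma> v}" using edge2H[OF i(1)] i by auto
  have lt: "T1 i < T2 i" using i by (simp add: T1_def T2_def)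
  have "jw EH lamH (\<sigma> u) (n+i) (T1 i)" using b'(1) e1 \<open>b' < T1 i\<close> by (rule jw.step)
  then have "jw EH lamH (\<sigma> u) (\<sigma> v) (T2 i)" using e2 lt by (rule jw.step)
  moreover have "T2 i < 2*M*(t+1)" using i by (simp add: T2_def algebra_simps)
  ultimately show ?case by blast
qed

definition "Q u y b \<longleftrightarrow>
   (\<forall>v\<in>V. y = \<sigma> v \<longrightarrow> v = u \<or> (\<exists>b0. jw E lam u v b0 \<and> 2*M*b0 + M \<le> b))
 \<and> (\<forall>i<M. y = n+i \<longrightarrow> (b = T1 i \<and> (src i = u \<or> (\<exists>b0. jw E lam u (src i) b0 \<and> b0 < tm i))) \<or> b = T2 i)"

lemma bwd: "jw EH lamH x y b \<Longrightarrow> u \<in> V \<Longrightarrow> x = \<sigma> u \<Longrightarrow> Q u y b"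
proof (induction rule: jw.induct)
  case (base x y T)
  from edge_cases[OF base(2)] obtain i where i: "i < M"
    "({x,y} = {\<sigma> (src i), n+i} \<and> T = T1 i) \<or> ({x,y} = {n+i, \<sigma> (dst i)} \<and> T = T2 i)" by blast
  have s: "\<sigma> (src i) < n" "\<sigma> (dst i) < n" "\<sigma> u < n" using srcV i sig_lt base by auto
  show ?case
  proof (cases "{x,y} = {\<sigma> (src i), n+i} \<and> T = T1 i")
    case True
    then have "x = \<sigma> (src i)" "y = n+i" using s base by (auto simp: doubleton_eq_iff)
    then have "src i = u" using sig_inj srcV i base by metis
    then show ?thesis unfolding Q_def using True \<open>y = n+i\<close> sig_lt by force
  next
    case False
    then have T: "{x,y} = {n+i, \<sigma> (dst i)}" "T = T2 i" using i by auto
    then have "y = n+i" using s base by (auto simp: doubleton_eq_iff)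
    then show ?thesis unfolding Q_def using T sig_lt by force
  qed
next
  case (step x w b y t)
  have Qw: "Q u w b" using step by blast
  from edge_cases[OF step(3)] obtain i where i: "i < M"
    "({w,y} = {\<sigma> (src i), n+i} \<and> t = T1 i) \<or> ({w,y} = {n+i, \<sigma> (dst i)} \<and> t = T2 i)" by blast
  have s: "\<sigma> (src i) < n" "\<sigma> (dst i) < n" using srcV i sig_lt by auto
  have T12: "T1 i < T2 i" using i by (simp add: T1_def T2_def)
  show ?case
  proof (cases "{w,y} = {\<sigma> (src i), n+i} \<and> t = T1 i")
    case True
    then consider "w = \<sigma> (src i)" "y = n+i" | "w = n+i" "y = \<sigma> (src i)" by (auto simp: doubleton_eq_iff)
    then show ?thesis
    proof cases
      case 1
      have sV: "src i \<in> V" using srcV i by auto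
      have "src i = u \<or> (\<exists>b0. jw E lam u (src i) b0 \<and> b0 < tm i)"
      proof -
        from Qw sV 1 have "src i = u \<or> (\<exists>b0. jw E lam u (src i) b0 \<and> 2*M*b0 + M \<le> b)"
          unfolding Q_def by blast
        moreover have "2*M*b0 + M \<le> b \<Longrightarrow> b0 < tm i" for b0
        proof -
          assume h: "2*M*b0 + M \<le> b"
          have "b < 2*M*tm i + M" using step.hyps(4) True i by (simp add: T1_def)
          then have "2*M*b0 < 2*M*tm i" using h by linarith
          then show "b0 < tm i" by (metis mult_less_cancel1)
        qed
        ultimately show ?thesis by blast
      qed
      then show ?thesis unfolding Q_def using 1 True sig_lt by force
    next
      case 2
      have "b = T1 i \<or> b = T2 i" using Qw 2 i unfolding Q_def by blast
      then show ?thesis using step.hyps(4) True T12 by auto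
    qed
  next
    case False
    then have T: "{w,y} = {n+i, \<sigma> (dst i)}" "t = T2 i" using i by auto
    then consider "w = n+i" "y = \<sigma> (dst i)" | "w = \<sigma> (dst i)" "y = n+i" by (auto simp: doubleton_eq_iff)
    then show ?thesis
    proof cases
      case 1
      have bb: "b = T1 i \<and> (src i = u \<or> (\<exists>b0. jw E lam u (src i) b0 \<and> b0 < tm i))"
        using Qw 1 i step.hyps(4) T unfolding Q_def by auto
      have "jw E lam u (dst i) (tm i)"
      proof (cases "src i = u")
        case True then show ?thesis using gi[OF i(1)] jw.base by metis
      next
        case False
        then obtain b0 where "jw E lam u (src i) b0" "b0 < tm i" using bb by blast
        then show ?thesis using gi[OF i(1)] jw.step by metis
      qed
      moreover have "2*M*tm i + M \<le> t" using T by (simp add: T2_def)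
      moreover have "\<forall>v\<in>V. y = \<sigma> v \<longrightarrow> v = dst i" using 1 sig_inj srcV i by metis
      ultimately show ?thesis unfolding Q_def using 1 s by force
    next
      case 2
      show ?thesis unfolding Q_def using 2 T sig_lt by force
    qed
  qed
qed

lemma reach_equiv: "u \<in> V \<Longrightarrow> v \<in> V \<Longrightarrow> reach_arc V E lam u v \<longleftrightarrow> reach_arc VH EH lamH (\<sigma> u) (\<sigma> v)"
proof -
  assume uv: "u \<in> V" "v \<in> V"
  have inV: "\<sigma> u \<in> VH" "\<sigma> v \<in> VH" using uv sig_lt unfolding VH_def by (auto simp: less_imp_le_nat trans_less_add1)
  have ne: "\<sigma> u = \<sigma> v \<longleftrightarrow> u = v" using sig_inj uv by auto
  show ?thesis
  proof
    assume "reach_arc V E lam u v"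
    then obtain b where "u \<noteq> v" "jw E lam u v b" using reach_jw by metis
    then show "reach_arc VH EH lamH (\<sigma> u) (\<sigma> v)" using fwd reach_jw inV ne by metis
  next
    assume "reach_arc VH EH lamH (\<sigma> u) (\<sigma> v)"
    then obtain b where "u \<noteq> v" "jw EH lamH (\<sigma> u) (\<sigma> v) b" using reach_jw ne by metis
    then have "Q u (\<sigma> v) b" using bwd uv by blast
    then have "\<exists>b0. jw E lam u v b0" using uv \<open>u \<noteq> v\<close> unfolding Q_def by blast
    then show "reach_arc V E lam u v" using reach_jw uv \<open>u \<noteq> v\<close> by metis
  qed
qed

end



lemma cardD:
  assumes tg: "temporal_graph V E lam" and fc: "finite (contacts E lam)"
    and sig: "bij_betw (\<sigma>::'a \<Rightarrow> nat) V {0..<n}"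
  shows "finite {(u,v,t). {u,v} \<in> E \<and> t \<in> lam {u,v}}
       \<and> card {(u,v,t). {u,v} \<in> E \<and> t \<in> lam {u,v}} = 2 * card (contacts E lam)"
proof -
  define D where "D = {(u,v,t). {u,v} \<in> E \<and> t \<in> lam {u,v}}"
  define D1 where "D1 = {(u,v,t). {u,v} \<in> E \<and> t \<in> lam {u,v} \<and> \<sigma> u < \<sigma> v}"
  define sw where "sw = (\<lambda>(u::'a,v::'a,t::nat). (v,u,t))"
  have edgeV: "{x,y} \<in> E \<Longrightarrow> x \<in> V \<and> y \<in> V \<and> x \<noteq> y" for x y
    using tg unfolding temporal_graph_def by (metis doubleton_eq_iff insert_absorb2)
  have inj: "x \<in> V \<Longrightarrow> y \<in> V \<Longrightarrow> \<sigma> x = \<sigma> y \<Longrightarrow> x = y" for x y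
    using sig unfolding bij_betw_def inj_on_def by blast
  have bij: "bij_betw (\<lambda>(u,v,t). ({u,v},t)) D1 (contacts E lam)"
    unfolding bij_betw_def
  proof
    show "inj_on (\<lambda>(u,v,t). ({u,v},t)) D1"
      unfolding inj_on_def D1_def by (auto simp: doubleton_eq_iff)
    show "(\<lambda>(u,v,t). ({u,v},t)) ` D1 = contacts E lam"
    proof
      show "(\<lambda>(u,v,t). ({u,v},t)) ` D1 \<subseteq> contacts E lam"
        unfolding D1_def contacts_def by auto
      show "contacts E lam \<subseteq> (\<lambda>(u,v,t). ({u,v},t)) ` D1"
      proof
        fix c assume "c \<in> contacts E lam"
        then obtain e t where c: "c = (e,t)" "e \<in> E" "t \<in> lam e" unfolding contacts_def by blast
        then obtain x y where xy: "e = {x,y}" "x \<noteq> y" "x \<in> V" "y \<in> V"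
          using tg unfolding temporal_graph_def by blast
        have "\<sigma> x \<noteq> \<sigma> y" using inj xy by blast
        then consider "\<sigma> x < \<sigma> y" | "\<sigma> y < \<sigma> x" by linarith
        then show "c \<in> (\<lambda>(u,v,t). ({u,v},t)) ` D1"
        proof cases
          case 1
          then have "(x,y,t) \<in> D1" using c xy unfolding D1_def by auto
          then show ?thesis using c xy by force
        next
          case 2
          then have "(y,x,t) \<in> D1" using c xy unfolding D1_def by (auto simp: insert_commute)
          then show ?thesis using c xy by (force simp: insert_commute)
        qed
      qed
    qed
  qed
  have f1: "finite D1" using bij fc bij_betw_finite by blast
  have c1: "card D1 = card (contacts E lam)" using bij bij_betw_same_card by blast
  have injsw: "inj_on sw D1" unfolding sw_def inj_on_def by auto
  have Dsplit: "D = D1 \<union> sw ` D1"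
  proof
    show "D \<subseteq> D1 \<union> sw ` D1"
    proof
      fix d assume "d \<in> D"
      then obtain u v t where d: "d = (u,v,t)" "{u,v} \<in> E" "t \<in> lam {u,v}" unfolding D_def by blast
      have "\<sigma> u \<noteq> \<sigma> v" using edgeV[OF d(2)] inj by blast
      then consider "\<sigma> u < \<sigma> v" | "\<sigma> v < \<sigma> u" by linarith
      then show "d \<in> D1 \<union> sw ` D1"
      proof cases
        case 1 then show ?thesis using d unfolding D1_def by auto
      next
        case 2
        then have "(v,u,t) \<in> D1" using d unfolding D1_def by (auto simp: insert_commute)
        then show ?thesis using d unfolding sw_def by force
      qed
    qed
    show "D1 \<union> sw ` D1 \<subseteq> D" unfolding D_def D1_def sw_def by (auto simp: insert_commute)
  qed
  have disj: "D1 \<inter> sw ` D1 = {}" unfolding D1_def sw_def by auto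
  have "finite D" using Dsplit f1 by simp
  moreover have "card D = card D1 + card (sw ` D1)"
    using Dsplit disj f1 by (simp add: card_Un_disjoint)
  moreover have "card (sw ` D1) = card D1" using injsw by (simp add: card_image)
  ultimately show ?thesis using c1 unfolding D_def by simp
qed

theorem mainTheorem11:
  fixes V :: "'a set" and E :: "'a set set" and lam :: "'a set \<Rightarrow> nat set"
  assumes "temporal_graph V E lam"
    and "finite (contacts E lam)"
  shows "\<exists>(VH :: nat set) EH lamH (\<sigma> :: 'a \<Rightarrow> nat).
           temporal_graph VH EH lamH \<and> happy EH lamH
         \<and> card VH = card V + 2 * card (contacts E lam)
         \<and> card EH = 4 * card (contacts E lam)
         \<and> inj_on \<sigma> V \<and> \<sigma> ` V \<subseteq> VH
         \<and> (\<forall>u\<in>V. \<forall>v\<in>V. reach_arc V E lam u v \<longleftrightarrow> reach_arc VH EH lamH (\<sigma> u) (\<sigma> v))"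
proof -
  have fV: "finite V" using assms(1) unfolding temporal_graph_def by blast
  obtain \<sigma> :: "'a \<Rightarrow> nat" where sig: "bij_betw \<sigma> V {0..<card V}"
    using ex_bij_betw_finite_nat[OF fV] by blast
  define D where "D = {(u,v,t). {u,v} \<in> E \<and> t \<in> lam {u,v}}"
  have fD: "finite D" and cD: "card D = 2 * card (contacts E lam)"
    using cardD[OF assms sig] unfolding D_def by auto
  obtain g where gb: "bij_betw g {0..<card D} D" using ex_bij_betw_nat_finite[OF fD] by blast
  interpret C: cons V E lam \<sigma> g "card V" "card D"
    using assms(1) sig gb unfolding D_def by unfold_locales auto
  have sV: "\<sigma> ` V \<subseteq> C.VH" unfolding C.VH_def using sig unfolding bij_betw_def by auto
  show ?thesis
    apply (rule exI[of _ C.VH], rule exI[of _ C.EH], rule exI[of _ C.lamH], rule exI[of _ \<sigma>])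
    using C.tgH C.happyH C.cardVH C.cardEH cD sig sV C.reach_equiv
    unfolding bij_betw_def by auto
qed

end
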